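(* Let $R\in\mathbb N$, let $I=\{n\in\mathbb Z : 1\leqslant n\leqslant R\}$, and let $\lambda_n\in\mathbb R$ ($n\in I$) satisfy $$|\lambda_n-\lambda_m|\geqslant \gamma>\sqrt{\tfrac{1}{3}+\tfrac{\pi^2}{12}}\quad\text{for all } n,m\in I \text{ with } n\neq m.$$ Then there exist constants $c_1,c_2>0$, depending only on $\gamma$ (and not on the coefficients), such that for all $a_n\in\mathbb C$ ($n\in I$), the function $f(t)=\sum_{n\in I}a_n\operatorname{sinc}(t-\lambda_n)$ satisfies $$c_1\sum_{n\in I}|a_n|^2\leqslant E_f\leqslant c_2\sum_{n\in I}|a_n|^2.$$
   Context: The sinc function is $\operatorname{sinc}(\alpha)=\frac{\sin(\pi\alpha)}{\pi\alpha}$ for $\alpha\neq 0$ and $\operatorname{sinc}(0)=1$. The energy of a signal $f:\mathbb R\to\mathbb C$ is $E_f=\int_{-\infty}^{\infty}|f(t)|^2\,dt$. *)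

theory Defs
  imports "HOL-Analysis.Analysis"
begin

definition sinc :: "real \<Rightarrow> real" where
  "sinc x = (if x = 0 then 1 else sin (pi * x) / (pi * x))"

definition energy :: "(real \<Rightarrow> complex) \<Rightarrow> real" where
  "energy f = (\<integral>t. (cmod (f t))\<^sup>2 \<partial>lborel)"

end

theory Submission
  imports Defs "HOL-Probability.Sinc_Integral" "HOL-Real_Asymp.Real_Asymp"
begin
hide_const (open) Sinc_Integral.sinc

lemma sinc_alt: "sinc x = Sinc_Integral.sinc (pi * x)"
  by (simp add: sinc_def)

lemma isCont_sinc': "isCont sinc x"
proof -
  have "isCont (\<lambda>x. Sinc_Integral.sinc (pi * x)) x"
    by (intro continuous_intros isCont_o2[OF _ isCont_sinc]) 
  then show ?thesis unfolding sinc_alt[abs_def] .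
qed

lemma continuous_on_sinc'[continuous_intros]:
  "continuous_on S f \<Longrightarrow> continuous_on S (\<lambda>x. sinc (f x))"
  using continuous_on_compose[of S f sinc, OF _ continuous_at_imp_continuous_on]
  by (auto simp: isCont_sinc' o_def)

lemma borel_measurable_sinc'[measurable]: "sinc \<in> borel_measurable borel"
  by (intro borel_measurable_continuous_onI continuous_at_imp_continuous_on ballI isCont_sinc')

lemma sinc_even: "sinc (-x) = sinc x"
  by (simp add: sinc_def)

lemma sinc_0[simp]: "sinc 0 = 1" by (simp add: sinc_def)

lemma sinc_abs_le1: "\<bar>sinc x\<bar> \<le> 1"
proof (cases "x = 0")
  case False
  have "\<bar>sin (pi*x)\<bar> \<le> \<bar>pi * x\<bar>" by (rule abs_sin_x_le_abs_x)
  moreover have "\<bar>pi*x\<bar> > 0" using False by simp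
  ultimately show ?thesis using False by (simp add: sinc_def abs_divide divide_le_eq_1)
qed simp

lemma sinc_abs_le2: "x \<noteq> 0 \<Longrightarrow> \<bar>sinc x\<bar> \<le> 1 / (pi * \<bar>x\<bar>)"
  by (simp add: sinc_def abs_divide abs_mult divide_right_mono)

lemma sinc_sq_le: "(sinc x)\<^sup>2 \<le> 2 / (1 + x\<^sup>2)"
proof (cases "\<bar>x\<bar> \<le> 1")
  case True
  have "(sinc x)\<^sup>2 \<le> 1" using sinc_abs_le1[of x]
    by (simp add: abs_square_le_1)
  moreover have "1 \<le> 2 / (1 + x\<^sup>2)"
  proof -
    have "x\<^sup>2 \<le> 1" using True by (simp add: abs_square_le_1)
    moreover have "0 < 1 + x\<^sup>2" by (simp add: add_pos_nonneg)
    ultimately show ?thesis by (smt (verit) le_divide_eq_1_pos)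
  qed
  ultimately show ?thesis by linarith
next
  case False
  then have x0: "x \<noteq> 0" by auto
  have "\<bar>sinc x\<bar> \<le> 1 / (pi * \<bar>x\<bar>)" by (rule sinc_abs_le2[OF x0])
  then have "(sinc x)\<^sup>2 \<le> (1 / (pi * \<bar>x\<bar>))\<^sup>2"
    by (metis abs_ge_zero power2_abs power_mono)
  also have "\<dots> = 1 / (pi\<^sup>2 * x\<^sup>2)" by (simp add: power_divide power_mult_distrib)
  also have "\<dots> \<le> 2 / (1 + x\<^sup>2)"
  proof -
    have "pi\<^sup>2 \<ge> 1" using pi_gt3 by (smt (verit) one_le_power)
    have "x\<^sup>2 \<ge> 1" using False by (simp add: abs_square_le_1[symmetric] abs_le_square_iff)
    have "x\<^sup>2 \<le> pi\<^sup>2 * x\<^sup>2" using \<open>pi\<^sup>2 \<ge> 1\<close> by (simp add: mult_le_cancel_right1)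
    then have "1 + x\<^sup>2 \<le> 2 * (pi\<^sup>2 * x\<^sup>2)" using \<open>x\<^sup>2 \<ge> 1\<close> by linarith
    moreover have "0 < 1 + x\<^sup>2" by (simp add: add_pos_nonneg)
    moreover have "0 < pi\<^sup>2 * x\<^sup>2" using x0 by simp
    ultimately show ?thesis by (simp add: divide_simps)

  qed
  finally show ?thesis .
qed


lemma integrable_inv_sq: "integrable lborel (\<lambda>x::real. inverse (1 + x\<^sup>2))"
  using integrable_inverse_1_plus_square by (simp add: set_integrable_def)

lemma integrable_inv_sq_shift: "integrable lborel (\<lambda>x::real. inverse (1 + (x - a)\<^sup>2))"
proof -
  have "integrable lborel (\<lambda>x::real. inverse (1 + ((-a) + 1 * x)\<^sup>2))"
    using lborel_integrable_real_affine_iff[of 1 "\<lambda>x. inverse (1 + x\<^sup>2)" "-a"] integrable_inv_sq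
    by simp
  then show ?thesis by simp
qed

lemma integrable_sinc_prod: "integrable lborel (\<lambda>t. sinc (t - a) * sinc (t - b))"
proof (rule Bochner_Integration.integrable_bound)
  show "integrable lborel (\<lambda>t. inverse (1 + (t - a)\<^sup>2) + inverse (1 + (t - b)\<^sup>2))"
    by (intro Bochner_Integration.integrable_add integrable_inv_sq_shift)
  show "(\<lambda>t. sinc (t - a) * sinc (t - b)) \<in> borel_measurable lborel" by measurable
  show "AE t in lborel. norm (sinc (t - a) * sinc (t - b))
          \<le> norm (inverse (1 + (t - a)\<^sup>2) + inverse (1 + (t - b)\<^sup>2))"
  proof (intro AE_I2)
    fix t
    have 1: "\<bar>sinc (t - a) * sinc (t - b)\<bar> \<le> ((sinc (t-a))\<^sup>2 + (sinc (t-b))\<^sup>2) / 2"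
    proof -
      have "2*(\<bar>sinc (t-a)\<bar>*\<bar>sinc (t-b)\<bar>) \<le> \<bar>sinc (t-a)\<bar>\<^sup>2 + \<bar>sinc (t-b)\<bar>\<^sup>2"
        using sum_squares_bound[of "\<bar>sinc (t-a)\<bar>" "\<bar>sinc (t-b)\<bar>"] by (simp add: mult.assoc)
      then show ?thesis by (simp add: abs_mult)
    qed
    have "(sinc (t-a))\<^sup>2 \<le> 2 * inverse (1 + (t - a)\<^sup>2)" using sinc_sq_le[of "t-a"]
      by (simp add: divide_inverse)
    moreover have "(sinc (t-b))\<^sup>2 \<le> 2 * inverse (1 + (t - b)\<^sup>2)" using sinc_sq_le[of "t-b"]
      by (simp add: divide_inverse)
    moreover have "inverse (1 + (t - a)\<^sup>2) \<ge> 0" "inverse (1 + (t - b)\<^sup>2) \<ge> 0" by auto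
    ultimately show "norm (sinc (t - a) * sinc (t - b))
          \<le> norm (inverse (1 + (t - a)\<^sup>2) + inverse (1 + (t - b)\<^sup>2))"
      using 1 by simp
  qed
qed


definition pp :: "real \<Rightarrow> real" where "pp x = sin (pi * x) * sinc x"
definition qq :: "real \<Rightarrow> real" where "qq x = cos (pi * x) * sinc x"
definition QQ :: "real \<Rightarrow> real" where "QQ x = Si (2 * pi * x) / (2 * pi)"

lemma qq_eq: "qq x = sinc (2 * x)"
proof (cases "x = 0")
  case False
  have "sin (pi * (2 * x)) = 2 * sin (pi * x) * cos (pi * x)"
    using sin_double[of "pi * x"] by (simp add: mult.commute mult.left_commute mult.assoc)
  then show ?thesis using False by (simp add: qq_def sinc_def field_simps)
qed (simp add: qq_def)

lemma QQ_deriv: "(QQ has_real_derivative qq x) (at x)"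
proof -
  have "((\<lambda>x. Si (2 * pi * x)) has_real_derivative Sinc_Integral.sinc (2 * pi * x) * (2 * pi)) (at x)"
    by (rule DERIV_chain2[OF DERIV_Si]) (auto intro!: derivative_eq_intros)
  then have "(QQ has_real_derivative Sinc_Integral.sinc (2 * pi * x) * (2 * pi) / (2 * pi)) (at x)"
    unfolding QQ_def[abs_def] by (rule DERIV_cdivide)
  moreover have "Sinc_Integral.sinc (2 * pi * x) * (2 * pi) / (2 * pi) = qq x"
    by (simp add: qq_eq sinc_alt mult.commute mult.left_commute)
  ultimately show ?thesis by simp
qed

lemma isCont_QQ: "isCont QQ x"
  using QQ_deriv by (rule DERIV_isCont)

lemma continuous_on_QQ: "continuous_on S QQ"
  by (simp add: continuous_at_imp_continuous_on isCont_QQ)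

lemma continuous_on_pp: "continuous_on S pp"
  unfolding pp_def[abs_def] by (intro continuous_intros)

lemma continuous_on_qq: "continuous_on S qq"
  unfolding qq_def[abs_def] by (intro continuous_intros)

lemma pp_odd: "pp (-x) = - pp x"
  by (simp add: pp_def sinc_even)

lemma pp_bound: "x \<noteq> 0 \<Longrightarrow> \<bar>pp x\<bar> \<le> 1 / (pi * \<bar>x\<bar>)"
proof -
  assume x: "x \<noteq> 0"
  have "\<bar>pp x\<bar> = \<bar>sin (pi*x)\<bar> * \<bar>sinc x\<bar>" by (simp add: pp_def abs_mult)
  also have "\<dots> \<le> 1 * \<bar>sinc x\<bar>" by (intro mult_right_mono) auto
  also have "\<dots> \<le> 1 / (pi * \<bar>x\<bar>)" using sinc_abs_le2[OF x] by simp
  finally show ?thesis .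
qed

lemma lim_integral_sym:
  fixes g :: "real \<Rightarrow> real"
  assumes g: "integrable lborel g"
  shows "((\<lambda>T. integral {-T..T} g) \<longlongrightarrow> (\<integral>x. g x \<partial>lborel)) at_top"
proof -
  have si: "set_integrable lborel {-T..T} g" for T
    unfolding set_integrable_def by (intro integrable_mult_indicator g) auto
  have eq: "integral {-T..T} g = (\<integral>x. indicator {-T..T} x *\<^sub>R g x \<partial>lborel)" for T
    using set_borel_integral_eq_integral(2)[OF si[of T]] by (simp add: set_lebesgue_integral_def)
  have "((\<lambda>T. \<integral>x. indicator {-T..T} x *\<^sub>R g x \<partial>lborel) \<longlongrightarrow> (\<integral>x. g x \<partial>lborel)) at_top"
  proof (rule integral_dominated_convergence_at_top[where w="\<lambda>x. norm (g x)"])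
    show "g \<in> borel_measurable lborel" using g by auto
    show "(\<lambda>x. indicator {-T..T} x *\<^sub>R g x) \<in> borel_measurable lborel" for T
      using g by auto
    show "integrable lborel (\<lambda>x. norm (g x))" using g by auto
    show "AE x in lborel. ((\<lambda>T. indicator {-T..T} x *\<^sub>R g x) \<longlongrightarrow> g x) at_top"
    proof (intro AE_I2)
      fix x
      have "eventually (\<lambda>T. indicator {-T..T} x *\<^sub>R g x = g x) at_top"
        using eventually_ge_at_top[of "\<bar>x\<bar>"] by eventually_elim (auto simp: indicator_def)
      then show "((\<lambda>T. indicator {-T..T} x *\<^sub>R g x) \<longlongrightarrow> g x) at_top"
        by (rule tendsto_eventually)
    qed
    show "\<forall>\<^sub>F T in at_top. AE x in lborel. norm (indicator {-T..T} x *\<^sub>R g x) \<le> norm (g x)"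
      by (intro always_eventually allI AE_I2) (auto simp: indicator_def)
  qed
  then show ?thesis by (simp add: eq)
qed


lemma int_qq_shift:
  assumes "\<alpha> \<le> \<beta>"
  shows "integral {\<alpha>..\<beta>} (\<lambda>t. qq (t - c)) = QQ (\<beta> - c) - QQ (\<alpha> - c)"
proof -
  have "((\<lambda>t. qq (t - c)) has_integral (QQ (\<beta> - c) - QQ (\<alpha> - c))) {\<alpha>..\<beta>}"
  proof (rule fundamental_theorem_of_calculus[OF assms, where f="\<lambda>t. QQ (t - c)"])
    fix x assume "x \<in> {\<alpha>..\<beta>}"
    have "((\<lambda>t. QQ (t - c)) has_real_derivative qq (x - c) * 1) (at x)"
      by (rule DERIV_chain2[OF QQ_deriv]) (auto intro!: derivative_eq_intros)
    then show "((\<lambda>t. QQ (t - c)) has_vector_derivative qq (x - c)) (at x within {\<alpha>..\<beta>})"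
      by (simp add: has_real_derivative_iff_has_vector_derivative has_vector_derivative_at_within)
  qed
  then show ?thesis by (rule integral_unique)
qed

lemma QQ_at_top: "((\<lambda>T. QQ (T - c)) \<longlongrightarrow> 1/4) at_top"
proof -
  have "filterlim (\<lambda>T. 2 * pi * (T - c)) at_top at_top" by real_asymp
  then have "((\<lambda>T. Si (2 * pi * (T - c))) \<longlongrightarrow> pi/2) at_top"
    by (rule filterlim_compose[OF Si_at_top])
  then have "((\<lambda>T. Si (2 * pi * (T - c)) / (2*pi)) \<longlongrightarrow> (pi/2)/(2*pi)) at_top"
    by (intro tendsto_divide) auto
  then show ?thesis by (simp add: QQ_def)
qed

lemma QQ_at_top': "((\<lambda>T. QQ (- T - c)) \<longlongrightarrow> -1/4) at_top"
proof -
  have "eventually (\<lambda>T. QQ (- T - c) = - QQ (T - (-c))) at_top"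
    using eventually_ge_at_top[of "-c"]
  proof eventually_elim
    case (elim T)
    have e: "2 * pi * (- T - c) = - (2 * pi * (T + c))" by (simp add: algebra_simps)
    have "2 * pi * (T + c) \<ge> 0" using elim by simp
    then have "Si (2 * pi * (- T - c)) = - Si (2 * pi * (T + c))"
      unfolding e by (rule Si_neg)
    then show ?case by (simp add: QQ_def)
  qed
  moreover have "((\<lambda>T. - QQ (T - (-c))) \<longlongrightarrow> -(1/4)) at_top"
    by (intro tendsto_minus QQ_at_top)
  ultimately show ?thesis by (simp add: tendsto_cong)
qed

lemma int_qq_lim: "((\<lambda>T. integral {-T..T} (\<lambda>t. qq (t - c))) \<longlongrightarrow> 1/2) at_top"
proof -
  have "eventually (\<lambda>T. integral {-T..T} (\<lambda>t. qq (t - c)) = QQ (T - c) - QQ (- T - c)) at_top"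
    using eventually_ge_at_top[of 0] by eventually_elim (simp add: int_qq_shift)
  moreover have "((\<lambda>T. QQ (T - c) - QQ (- T - c)) \<longlongrightarrow> 1/4 - (-1/4)) at_top"
    by (intro tendsto_diff QQ_at_top QQ_at_top')
  ultimately show ?thesis by (simp add: tendsto_cong)
qed

lemma pp_at_top: "((\<lambda>T. pp (T - c)) \<longlongrightarrow> 0) at_top"
proof (rule Lim_null_comparison)
  show "eventually (\<lambda>T. norm (pp (T - c)) \<le> 1 / (pi * (T - c))) at_top"
    using eventually_gt_at_top[of c]
  proof eventually_elim
    case (elim T)
    then show ?case using pp_bound[of "T - c"] by simp
  qed
  show "((\<lambda>T. 1 / (pi * (T - c))) \<longlongrightarrow> 0) at_top" by real_asymp
qed

lemma pp_sym: "integral {-x..x} pp = 0"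
proof -
  have "integral {-x..x} pp = integral {-x..-(-x)} (\<lambda>t. pp (-t))"
    using Henstock_Kurzweil_Integration.integral_reflect_real[where a="-x" and b=x and f=pp] by simp
  also have "\<dots> = integral {-x..x} (\<lambda>t. - pp t)" by (simp add: pp_odd)
  also have "\<dots> = - integral {-x..x} pp" by (simp add: integral_neg)
  finally show ?thesis by simp
qed

lemma pp_tail: assumes "0 < x" "x \<le> y" shows "\<bar>integral {x..y} pp\<bar> \<le> (y - x) / (pi * x)"
proof -
  have "norm (integral {x..y} pp) \<le> 1 / (pi * x) * (y - x)"
  proof (rule integral_bound[OF assms(2) continuous_on_pp])
    fix t assume t: "t \<in> {x..y}"
    then have "t > 0" using assms by auto
    have "\<bar>pp t\<bar> \<le> 1 / (pi * \<bar>t\<bar>)" using pp_bound[of t] \<open>t > 0\<close> by simp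
    also have "\<dots> \<le> 1 / (pi * x)" using t \<open>t > 0\<close> assms
      by (intro divide_left_mono mult_left_mono) auto
    finally show "norm (pp t) \<le> 1 / (pi * x)" by simp
  qed
  then show ?thesis by simp
qed

definition JJ :: "real \<Rightarrow> real \<Rightarrow> real" where "JJ T c = integral {-T-c..T-c} pp"

lemma pp_integrable: "pp integrable_on {a..b}"
  by (intro integrable_continuous_real continuous_on_pp)

lemma JJ_pos_bound: assumes "0 \<le> c" "c < T" shows "\<bar>JJ T c\<bar> \<le> 2 * c / (pi * (T - c))"
proof -
  have "integral {-T-c..T-c} pp + integral {T-c..T+c} pp = integral {-T-c..T+c} pp"
    using assms by (intro Henstock_Kurzweil_Integration.integral_combine pp_integrable) auto
  moreover have "integral {-T-c..T+c} pp = 0" using pp_sym[of "T+c"] by simp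
  ultimately have "JJ T c = - integral {T-c..T+c} pp" by (simp add: JJ_def)
  moreover have "\<bar>integral {T-c..T+c} pp\<bar> \<le> ((T+c) - (T-c)) / (pi * (T-c))"
    using assms by (intro pp_tail) auto
  ultimately show ?thesis by simp
qed

lemma JJ_neg: "JJ T c = - JJ T (-c)"
proof -
  have "integral {-(T-c)..-(-T-c)} (\<lambda>x. pp (-x)) = integral {-T-c..T-c} pp"
    by (rule Henstock_Kurzweil_Integration.integral_reflect_real)
  moreover have "integral {-(T-c)..-(-T-c)} (\<lambda>x. pp (-x)) = - integral {-(T-c)..-(-T-c)} pp"
    by (simp add: pp_odd integral_neg)
  moreover have "{-(T-c)..-(-T-c)} = {c-T..c+T}" by auto
  ultimately have "JJ T c = - integral {c-T..c+T} pp" unfolding JJ_def by simp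
  moreover have "{-T - (-c)..T - (-c)} = {c-T..c+T}" by auto
  then have "JJ T (-c) = integral {c-T..c+T} pp" unfolding JJ_def by metis
  ultimately show ?thesis by simp
qed

lemma JJ_bound: assumes "\<bar>c\<bar> < T" shows "\<bar>JJ T c\<bar> \<le> 2 * \<bar>c\<bar> / (pi * (T - \<bar>c\<bar>))"
proof (cases "c \<ge> 0")
  case True then show ?thesis using JJ_pos_bound[of c T] assms by simp
next
  case False
  then have "\<bar>JJ T (-c)\<bar> \<le> 2 * (-c) / (pi * (T - (-c)))" using JJ_pos_bound[of "-c" T] assms by simp
  then show ?thesis using False JJ_neg[of T c] by simp
qed

lemma int_pp_lim: "((\<lambda>T. integral {-T..T} (\<lambda>t. pp (t - c))) \<longlongrightarrow> 0) at_top"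
proof -
  have eq: "integral {-T..T} (\<lambda>t. pp (t - c)) = JJ T c" for T
    using integral_shift_real_ivl[of "-T-c" "-c" "T-c" pp] by (simp add: JJ_def)
  have "((\<lambda>T. JJ T c) \<longlongrightarrow> 0) at_top"
  proof (rule Lim_null_comparison)
    show "eventually (\<lambda>T. norm (JJ T c) \<le> 2 * \<bar>c\<bar> / (pi * (T - \<bar>c\<bar>))) at_top"
      using eventually_gt_at_top[of "\<bar>c\<bar>"] by eventually_elim (use JJ_bound in auto)
    show "((\<lambda>T. 2 * \<bar>c\<bar> / (pi * (T - \<bar>c\<bar>))) \<longlongrightarrow> 0) at_top" by real_asymp
  qed
  then show ?thesis by (simp add: eq)
qed


lemma aux_frac: fixes u v x y :: real
  assumes "u \<noteq> 0" "v \<noteq> 0"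
  shows "y / (pi * v) * x - x / (pi * u) * y = pi * (u - v) * (x / (pi * u) * (y / (pi * v)))"
  using assms by (simp add: field_simps)

lemma sinc_prod_identity:
  assumes d: "d \<noteq> 0" and uv: "u = v + d"
  shows "sinc u * sinc v = (cos (pi * d) * (pp v - pp u) + sin (pi * d) * (qq v + qq u)) / (pi * d)"
proof -
  have su: "sin (pi * u) = sin (pi * v) * cos (pi * d) + cos (pi * v) * sin (pi * d)"
    using sin_add[of "pi * v" "pi * d"] uv by (simp add: distrib_left)
  have sv: "sin (pi * v) = sin (pi * u) * cos (pi * d) - cos (pi * u) * sin (pi * d)"
    using sin_diff[of "pi * u" "pi * d"] uv by (simp add: distrib_left)
  have A: "cos (pi * d) * (pp v - pp u) + sin (pi * d) * (qq v + qq u)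
       = sinc v * sin (pi * u) - sinc u * sin (pi * v)"
  proof -
    have A1: "cos (pi * d) * (pp v - pp u) + sin (pi * d) * (qq v + qq u)
       = sinc v * (sin (pi * v) * cos (pi * d) + cos (pi * v) * sin (pi * d))
         - sinc u * (sin (pi * u) * cos (pi * d) - cos (pi * u) * sin (pi * d))"
      unfolding pp_def qq_def by (simp add: algebra_simps)
    show ?thesis unfolding A1 by (simp only: flip: su sv)
  qed
  have B: "sinc v * sin (pi * u) - sinc u * sin (pi * v) = pi * d * (sinc u * sinc v)"
  proof (cases "u = 0")
    case True
    then have "v = -d" using uv by simp
    then show ?thesis using True d by (simp add: sinc_def)
  next
    case u0: False
    show ?thesis
    proof (cases "v = 0")
      case True
      then have "u = d" using uv by simp
      then show ?thesis using True d by (simp add: sinc_def)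
    next
      case v0: False
      have "d = u - v" using uv by simp
      then show ?thesis using u0 v0 aux_frac[OF u0 v0, of "sin (pi * v)" "sin (pi * u)"]
        by (simp add: sinc_def)
    qed
  qed
  show ?thesis using A B d by (simp add: field_simps)
qed


lemma pp_alt: "pp = (\<lambda>x. (sin (pi * x))\<^sup>2 / (pi * x))"
  by (rule ext) (simp add: pp_def sinc_def power2_eq_square)

definition HH :: "real \<Rightarrow> real" where "HH x = 2 * QQ x - pp x / pi"

lemma HH_deriv: assumes "x \<noteq> 0" shows "(HH has_real_derivative sinc x * sinc x) (at x)"
proof -
  have "((\<lambda>x. (sin (pi * x))\<^sup>2 / (pi * x)) has_real_derivative
     ((2 * sin (pi * x) * (cos (pi * x) * pi)) * (pi * x) - (sin (pi * x))\<^sup>2 * pi) / (pi * x)\<^sup>2) (at x)"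
    using assms by (auto intro!: derivative_eq_intros simp: power2_eq_square)
  then have d: "(pp has_real_derivative
     ((2 * sin (pi * x) * (cos (pi * x) * pi)) * (pi * x) - (sin (pi * x))\<^sup>2 * pi) / (pi * x)\<^sup>2) (at x)"
    by (simp add: pp_alt)
  have "(HH has_real_derivative 2 * qq x - ((2 * sin (pi * x) * (cos (pi * x) * pi)) * (pi * x) - (sin (pi * x))\<^sup>2 * pi) / (pi * x)\<^sup>2 / pi) (at x)"
    unfolding HH_def[abs_def] by (intro DERIV_diff DERIV_cmult QQ_deriv DERIV_cdivide d)
  moreover have "2 * qq x - ((2 * sin (pi * x) * (cos (pi * x) * pi)) * (pi * x) - (sin (pi * x))\<^sup>2 * pi) / (pi * x)\<^sup>2 / pi
      = sinc x * sinc x"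
    using assms by (simp add: qq_def sinc_def field_simps power2_eq_square)
  ultimately show ?thesis by simp
qed

lemma continuous_on_HH: "continuous_on S HH"
  unfolding HH_def[abs_def] by (intro continuous_intros continuous_on_QQ continuous_on_pp) auto

lemma gram_diag: "(\<integral>t. sinc (t - a) * sinc (t - a) \<partial>lborel) = 1"
proof -
  have eq: "integral {-T..T} (\<lambda>t. sinc (t - a) * sinc (t - a)) = HH (T - a) - HH (-T - a)" if "T \<ge> 0" for T
  proof -
    have "((\<lambda>t. sinc (t - a) * sinc (t - a)) has_integral (HH (T - a) - HH (-T - a))) {-T..T}"
    proof (rule fundamental_theorem_of_calculus_interior_strong[where S="{a}" and f="\<lambda>t. HH (t - a)"])
      show "-T \<le> T" using that by simp
      show "continuous_on {-T..T} (\<lambda>t. HH (t - a))"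
        by (rule continuous_on_compose2[OF continuous_on_HH[of UNIV]]) (auto intro!: continuous_intros)
      fix x assume "x \<in> {-T<..<T} - {a}"
      then have "x - a \<noteq> 0" by auto
      have "((\<lambda>t. HH (t - a)) has_real_derivative sinc (x - a) * sinc (x - a) * 1) (at x)"
        by (rule DERIV_chain2[where f=HH and g="\<lambda>t. t - a", OF HH_deriv[OF \<open>x - a \<noteq> 0\<close>]]) (auto intro!: derivative_eq_intros)
      then show "((\<lambda>t. HH (t - a)) has_vector_derivative sinc (x - a) * sinc (x - a)) (at x)"
        by (simp add: has_real_derivative_iff_has_vector_derivative)
    qed auto
    then show ?thesis by (rule integral_unique)
  qed
  have lim1: "((\<lambda>T. integral {-T..T} (\<lambda>t. sinc (t - a) * sinc (t - a))) \<longlongrightarrow> (\<integral>t. sinc (t - a) * sinc (t - a) \<partial>lborel)) at_top"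
    by (rule lim_integral_sym[OF integrable_sinc_prod])
  have HHe: "HH (T - a) - HH (-T - a) = 2 * (QQ (T - a) - QQ (-T - a)) - (pp (T - a) + pp (T - (-a))) / pi" for T
  proof -
    have "pp (-T - a) = - pp (T - (-a))" using pp_odd[of "T + a"] by simp
    then show ?thesis by (simp add: HH_def field_simps)
  qed
  have "((\<lambda>T. 2 * (QQ (T - a) - QQ (-T - a)) - (pp (T - a) + pp (T - (-a))) / pi) \<longlongrightarrow> 2 * (1/4 - (-1/4)) - (0 + 0) / pi) at_top"
    by (intro tendsto_intros QQ_at_top QQ_at_top' pp_at_top) auto
  then have "((\<lambda>T. 2 * (QQ (T - a) - QQ (-T - a)) - (pp (T - a) + pp (T - (-a))) / pi) \<longlongrightarrow> 1) at_top"
    by simp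
  then have lim2: "((\<lambda>T. integral {-T..T} (\<lambda>t. sinc (t - a) * sinc (t - a))) \<longlongrightarrow> 1) at_top"
  proof (rule Lim_transform_eventually)
    show "eventually (\<lambda>T. 2 * (QQ (T - a) - QQ (-T - a)) - (pp (T - a) + pp (T - (-a))) / pi
        = integral {-T..T} (\<lambda>t. sinc (t - a) * sinc (t - a))) at_top"
      using eventually_ge_at_top[of 0] by eventually_elim (simp add: eq HHe)
  qed
  show ?thesis using tendsto_unique[OF _ lim1 lim2] by simp
qed


lemma pp_shift_integrable: "(\<lambda>t. pp (t - c)) integrable_on {x..y}"
  by (intro integrable_continuous_real continuous_on_compose2[OF continuous_on_pp[of UNIV]])
     (auto intro!: continuous_intros)

lemma qq_shift_integrable: "(\<lambda>t. qq (t - c)) integrable_on {x..y}"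
  by (intro integrable_continuous_real continuous_on_compose2[OF continuous_on_qq[of UNIV]])
     (auto intro!: continuous_intros)

lemma cont_pp_shift: "continuous_on S (\<lambda>t. pp (t - c))"
  by (intro continuous_on_compose2[OF continuous_on_pp[of UNIV]]) (auto intro!: continuous_intros)

lemma cont_qq_shift: "continuous_on S (\<lambda>t. qq (t - c))"
  by (intro continuous_on_compose2[OF continuous_on_qq[of UNIV]]) (auto intro!: continuous_intros)

lemma gram_offdiag:
  assumes "a \<noteq> b"
  shows "(\<integral>t. sinc (t - a) * sinc (t - b) \<partial>lborel) = sinc (a - b)"
proof -
  define d where "d = b - a"
  have d0: "d \<noteq> 0" using assms by (simp add: d_def)
  have pt: "sinc (t - a) * sinc (t - b) =
      (cos (pi * d) * (pp (t - b) - pp (t - a)) + sin (pi * d) * (qq (t - b) + qq (t - a))) / (pi * d)" for t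
    by (rule sinc_prod_identity[OF d0]) (simp add: d_def)
  have int_eq: "integral {-T..T} (\<lambda>t. sinc (t - a) * sinc (t - b)) =
      (cos (pi * d) * (integral {-T..T} (\<lambda>t. pp (t - b)) - integral {-T..T} (\<lambda>t. pp (t - a)))
       + sin (pi * d) * (integral {-T..T} (\<lambda>t. qq (t - b)) + integral {-T..T} (\<lambda>t. qq (t - a)))) / (pi * d)" for T
  proof -
    have "integral {-T..T} (\<lambda>t. sinc (t - a) * sinc (t - b)) =
      integral {-T..T} (\<lambda>t. (cos (pi * d) * (pp (t - b) - pp (t - a)) + sin (pi * d) * (qq (t - b) + qq (t - a))) / (pi * d))"
      by (simp only: pt)
    also have "\<dots> = integral {-T..T} (\<lambda>t. cos (pi * d) * (pp (t - b) - pp (t - a)) + sin (pi * d) * (qq (t - b) + qq (t - a))) / (pi * d)"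
      by (rule integral_divide)
    also have "integral {-T..T} (\<lambda>t. cos (pi * d) * (pp (t - b) - pp (t - a)) + sin (pi * d) * (qq (t - b) + qq (t - a)))
       = integral {-T..T} (\<lambda>t. cos (pi * d) * (pp (t - b) - pp (t - a))) + integral {-T..T} (\<lambda>t. sin (pi * d) * (qq (t - b) + qq (t - a)))"
      by (intro integral_add integrable_continuous_real continuous_intros cont_pp_shift cont_qq_shift)
    also have "integral {-T..T} (\<lambda>t. cos (pi * d) * (pp (t - b) - pp (t - a))) = cos (pi * d) * (integral {-T..T} (\<lambda>t. pp (t - b)) - integral {-T..T} (\<lambda>t. pp (t - a)))"
      by (simp add: integral_diff pp_shift_integrable)
    also have "integral {-T..T} (\<lambda>t. sin (pi * d) * (qq (t - b) + qq (t - a))) = sin (pi * d) * (integral {-T..T} (\<lambda>t. qq (t - b)) + integral {-T..T} (\<lambda>t. qq (t - a)))"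
      by (simp add: integral_add qq_shift_integrable)
    finally show ?thesis .
  qed
  have "((\<lambda>T. (cos (pi * d) * (integral {-T..T} (\<lambda>t. pp (t - b)) - integral {-T..T} (\<lambda>t. pp (t - a)))
       + sin (pi * d) * (integral {-T..T} (\<lambda>t. qq (t - b)) + integral {-T..T} (\<lambda>t. qq (t - a)))) / (pi * d))
     \<longlongrightarrow> (cos (pi * d) * (0 - 0) + sin (pi * d) * (1/2 + 1/2)) / (pi * d)) at_top"
    using d0 by (intro tendsto_intros int_pp_lim int_qq_lim) auto
  moreover have v: "(cos (pi * d) * (0 - 0) + sin (pi * d) * (1/2 + 1/2)) / (pi * d) = sinc (a - b)"
  proof -
    have "a - b = - d" by (simp add: d_def)
    then have "sinc (a - b) = sinc d" by (simp add: sinc_even)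
    then show ?thesis using d0 by (simp add: sinc_def)
  qed
  ultimately have lim2: "((\<lambda>T. integral {-T..T} (\<lambda>t. sinc (t - a) * sinc (t - b))) \<longlongrightarrow> sinc (a - b)) at_top"
    by (simp only: int_eq)
  have lim1: "((\<lambda>T. integral {-T..T} (\<lambda>t. sinc (t - a) * sinc (t - b))) \<longlongrightarrow> (\<integral>t. sinc (t - a) * sinc (t - b) \<partial>lborel)) at_top"
    by (rule lim_integral_sym[OF integrable_sinc_prod])
  show ?thesis using tendsto_unique[OF _ lim1 lim2] by simp
qed

lemma gram: "(\<integral>t. sinc (t - a) * sinc (t - b) \<partial>lborel) = sinc (a - b)"
  using gram_offdiag[of a b] gram_diag[of a] by (cases "a = b") auto


lemma cmod_sum_sq:
  fixes a :: "nat \<Rightarrow> complex" and x :: "nat \<Rightarrow> real"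
  shows "(cmod (\<Sum>n\<in>I. a n * complex_of_real (x n)))\<^sup>2
       = (\<Sum>n\<in>I. \<Sum>m\<in>I. Re (a n * cnj (a m)) * (x n * x m))"
proof -
  let ?z = "\<Sum>n\<in>I. a n * complex_of_real (x n)"
  have "complex_of_real ((cmod ?z)\<^sup>2) = ?z * cnj ?z" by (rule complex_norm_square)
  also have "\<dots> = (\<Sum>n\<in>I. \<Sum>m\<in>I. (a n * complex_of_real (x n)) * cnj (a m * complex_of_real (x m)))"
    by (simp add: cnj_sum sum_product)
  finally have "(cmod ?z)\<^sup>2 = Re (\<Sum>n\<in>I. \<Sum>m\<in>I. (a n * complex_of_real (x n)) * cnj (a m * complex_of_real (x m)))"
    by (metis Re_complex_of_real)
  also have "\<dots> = (\<Sum>n\<in>I. \<Sum>m\<in>I. Re (a n * cnj (a m)) * (x n * x m))"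
    by (simp add: Re_sum algebra_simps)
  finally show ?thesis .
qed

definition QF :: "nat set \<Rightarrow> (nat \<Rightarrow> complex) \<Rightarrow> (nat \<Rightarrow> real) \<Rightarrow> (real \<Rightarrow> real) \<Rightarrow> real" where
  "QF I a lam W = (\<Sum>n\<in>I. \<Sum>m\<in>I. Re (a n * cnj (a m)) * W (lam n - lam m))"

lemma energy_eq:
  assumes "finite I"
  shows "energy (\<lambda>t. \<Sum>n\<in>I. a n * complex_of_real (sinc (t - lam n))) = QF I a lam sinc"
proof -
  have "energy (\<lambda>t. \<Sum>n\<in>I. a n * complex_of_real (sinc (t - lam n)))
      = (\<integral>t. (\<Sum>n\<in>I. \<Sum>m\<in>I. Re (a n * cnj (a m)) * (sinc (t - lam n) * sinc (t - lam m))) \<partial>lborel)"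
    unfolding energy_def by (simp only: cmod_sum_sq)
  also have "\<dots> = (\<Sum>n\<in>I. \<Sum>m\<in>I. Re (a n * cnj (a m)) * (\<integral>t. sinc (t - lam n) * sinc (t - lam m) \<partial>lborel))"
    by (simp add: Bochner_Integration.integral_sum Bochner_Integration.integrable_sum integrable_sinc_prod)
  also have "\<dots> = QF I a lam sinc" by (simp add: QF_def gram)
  finally show ?thesis .
qed


definition PP :: "nat set \<Rightarrow> (nat \<Rightarrow> complex) \<Rightarrow> (nat \<Rightarrow> real) \<Rightarrow> real \<Rightarrow> real" where
  "PP I a lam \<xi> = (\<Sum>n\<in>I. \<Sum>m\<in>I. Re (a n * cnj (a m)) * cos (2 * pi * (lam n - lam m) * \<xi>))"

lemma PP_nonneg: "0 \<le> PP I a lam \<xi>"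
proof -
  define th where "th n = 2 * pi * lam n * \<xi>" for n
  have "PP I a lam \<xi> = (\<Sum>n\<in>I. \<Sum>m\<in>I. Re (a n * cnj (a m)) * (cos (th n) * cos (th m)))
        + (\<Sum>n\<in>I. \<Sum>m\<in>I. Re (a n * cnj (a m)) * (sin (th n) * sin (th m)))"
  proof -
    have "cos (2 * pi * (lam n - lam m) * \<xi>) = cos (th n) * cos (th m) + sin (th n) * sin (th m)" for n m
    proof -
      have "2 * pi * (lam n - lam m) * \<xi> = th n - th m" by (simp add: th_def algebra_simps)
      then show ?thesis by (simp add: cos_diff)
    qed
    then show ?thesis by (simp add: PP_def distrib_left sum.distrib)
  qed
  also have "\<dots> = (cmod (\<Sum>n\<in>I. a n * complex_of_real (cos (th n))))\<^sup>2
                  + (cmod (\<Sum>n\<in>I. a n * complex_of_real (sin (th n))))\<^sup>2"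
    by (simp only: cmod_sum_sq)
  also have "\<dots> \<ge> 0" by simp
  finally show ?thesis .
qed

lemma continuous_on_PP: "continuous_on S (PP I a lam)"
  unfolding PP_def[abs_def] by (intro continuous_intros)

lemma PP_integral:
  assumes "finite I" and w: "continuous_on {\<alpha>..\<beta>} w"
  shows "integral {\<alpha>..\<beta>} (\<lambda>\<xi>. w \<xi> * PP I a lam \<xi>)
       = QF I a lam (\<lambda>x. integral {\<alpha>..\<beta>} (\<lambda>\<xi>. w \<xi> * cos (2 * pi * x * \<xi>)))"
proof -
  define c where "c n m = Re (a n * cnj (a m))" for n m
  define g where "g n m \<xi> = w \<xi> * cos (2 * pi * (lam n - lam m) * \<xi>)" for n m \<xi>
  have int: "g n m integrable_on {\<alpha>..\<beta>}" for n m
    unfolding g_def by (intro integrable_continuous_real continuous_intros w)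
  have "integral {\<alpha>..\<beta>} (\<lambda>\<xi>. w \<xi> * PP I a lam \<xi>)
      = integral {\<alpha>..\<beta>} (\<lambda>\<xi>. \<Sum>n\<in>I. \<Sum>m\<in>I. c n m * g n m \<xi>)"
    unfolding PP_def c_def g_def by (simp add: sum_distrib_left mult.commute mult.left_commute)
  also have "\<dots> = (\<Sum>n\<in>I. integral {\<alpha>..\<beta>} (\<lambda>\<xi>. \<Sum>m\<in>I. c n m * g n m \<xi>))"
    by (intro integral_sum assms(1) integrable_sum integrable_on_mult_right int)
  also have "\<dots> = (\<Sum>n\<in>I. \<Sum>m\<in>I. integral {\<alpha>..\<beta>} (\<lambda>\<xi>. c n m * g n m \<xi>))"
    by (intro sum.cong refl integral_sum assms(1) integrable_on_mult_right int)
  also have "\<dots> = (\<Sum>n\<in>I. \<Sum>m\<in>I. c n m * integral {\<alpha>..\<beta>} (g n m))"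
    by simp
  finally show ?thesis by (simp add: QF_def c_def g_def[abs_def])
qed

lemma aux_div: "(y::real) \<noteq> 0 \<Longrightarrow> c * y / (2 * y) = c / 2"
  by simp

lemma cos_cos_int:
  fixes \<alpha> \<beta> B :: real
  assumes "\<alpha> + \<beta> \<noteq> 0" "\<alpha> - \<beta> \<noteq> 0" "0 \<le> B"
  shows "integral {-B..B} (\<lambda>\<xi>. cos (\<alpha> * \<xi>) * cos (\<beta> * \<xi>)) = sin ((\<alpha>+\<beta>)*B)/(\<alpha>+\<beta>) + sin ((\<alpha>-\<beta>)*B)/(\<alpha>-\<beta>)"
proof -
  define F where "F \<xi> = sin ((\<alpha>+\<beta>)*\<xi>)/(2*(\<alpha>+\<beta>)) + sin ((\<alpha>-\<beta>)*\<xi>)/(2*(\<alpha>-\<beta>))" for \<xi>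
  have "((\<lambda>\<xi>. cos (\<alpha> * \<xi>) * cos (\<beta> * \<xi>)) has_integral (F B - F (-B))) {-B..B}"
  proof (rule fundamental_theorem_of_calculus[where f=F])
    show "-B \<le> B" using assms by simp
    fix x assume "x \<in> {-B..B}"
    have "(F has_real_derivative cos ((\<alpha>+\<beta>)*x) * (\<alpha>+\<beta>) / (2*(\<alpha>+\<beta>)) + cos ((\<alpha>-\<beta>)*x) * (\<alpha>-\<beta>) / (2*(\<alpha>-\<beta>))) (at x)"
      unfolding F_def[abs_def] using assms by (auto intro!: derivative_eq_intros)
    moreover have "cos ((\<alpha>+\<beta>)*x) * (\<alpha>+\<beta>) / (2*(\<alpha>+\<beta>)) + cos ((\<alpha>-\<beta>)*x) * (\<alpha>-\<beta>) / (2*(\<alpha>-\<beta>))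
       = cos (\<alpha> * x) * cos (\<beta> * x)"
    proof -
      have 1: "cos ((\<alpha>+\<beta>)*x) * (\<alpha>+\<beta>) / (2*(\<alpha>+\<beta>)) = cos (\<alpha>*x + \<beta>*x) / 2"
        using assms aux_div[of "\<alpha>+\<beta>" "cos ((\<alpha>+\<beta>)*x)"] by (simp only: distrib_right not_False_eq_True)
      have 2: "cos ((\<alpha>-\<beta>)*x) * (\<alpha>-\<beta>) / (2*(\<alpha>-\<beta>)) = cos (\<alpha>*x - \<beta>*x) / 2"
        using assms aux_div[of "\<alpha>-\<beta>" "cos ((\<alpha>-\<beta>)*x)"] by (simp only: left_diff_distrib right_minus_eq not_False_eq_True)
      show ?thesis unfolding 1 2 cos_add cos_diff by (simp add: field_simps)
    qed
    ultimately show "(F has_vector_derivative cos (\<alpha> * x) * cos (\<beta> * x)) (at x within {-B..B})"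
      by (simp add: has_real_derivative_iff_has_vector_derivative has_vector_derivative_at_within)
  qed
  moreover have "F B - F (-B) = sin ((\<alpha>+\<beta>)*B)/(\<alpha>+\<beta>) + sin ((\<alpha>-\<beta>)*B)/(\<alpha>-\<beta>)"
  proof -
    have "F (-B) = - F B" by (simp only: F_def mult_minus_right sin_minus)
    then have "F B - F (-B) = 2 * F B" by simp
    also have "\<dots> = sin ((\<alpha>+\<beta>)*B)/(\<alpha>+\<beta>) + sin ((\<alpha>-\<beta>)*B)/(\<alpha>-\<beta>)"
    proof -
      have h: "2 * (x / (2*y)) = x / y" for x y :: real by simp
      show ?thesis unfolding F_def
        by (simp only: distrib_left[of "2::real" "sin ((\<alpha>+\<beta>)*B)/(2*(\<alpha>+\<beta>))"] h)
    qed
    finally show ?thesis .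
  qed
  ultimately show ?thesis by (simp add: integral_unique)
qed


lemma sin_half_plus: "sin (pi/2 + y) = cos y"
  by (simp add: sin_add)
lemma sin_half_minus: "sin (pi/2 - y) = cos y"
  by (simp add: sin_diff)

lemma sinc_int: "integral {-1/2..1/2} (\<lambda>\<xi>. 1 * cos (2 * pi * x * \<xi>)) = sinc x"
proof (cases "x = 0")
  case True
  then show ?thesis by simp
next
  case False
  have "integral {-(1/2)..1/2} (\<lambda>\<xi>. cos (0 * \<xi>) * cos ((2 * pi * x) * \<xi>))
      = sin ((0 + 2*pi*x)*(1/2))/(0 + 2*pi*x) + sin ((0 - 2*pi*x)*(1/2))/(0 - 2*pi*x)"
    using False by (intro cos_cos_int) auto
  also have "\<dots> = sinc x" using False by (simp add: sinc_def)
  finally show ?thesis by simp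
qed

definition KL :: "real \<Rightarrow> real" where
  "KL x = integral {-1/2..1/2} (\<lambda>\<xi>. cos (pi * \<xi>) * cos (2 * pi * x * \<xi>))"

definition KU :: "real \<Rightarrow> real" where
  "KU x = integral {-1..1} (\<lambda>\<xi>. cos (pi / 2 * \<xi>) * cos (2 * pi * x * \<xi>))"

lemma aux_frac2: "(p::real) \<noteq> 0 \<Longrightarrow> q \<noteq> 0 \<Longrightarrow> 1/(pi*p) + 1/(pi*q) = (p+q)/(pi*(p*q))"
  by (simp add: field_simps)

lemma KL_formula:
  assumes "4 * x\<^sup>2 \<noteq> 1"
  shows "KL x = cos (pi * x) * (2 / (pi * (1 - 4 * x\<^sup>2)))"
proof -
  have x1: "1 + 2 * x \<noteq> 0"
  proof
    assume "1 + 2 * x = 0" then have xe: "x = -1/2" by linarith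
    from assms[unfolded xe] show False by (simp add: power2_eq_square)
  qed
  have x2: "1 - 2 * x \<noteq> 0"
  proof
    assume "1 - 2 * x = 0" then have xe: "x = 1/2" by linarith
    from assms[unfolded xe] show False by (simp add: power2_eq_square)
  qed
  have e1: "pi + 2*pi*x = pi*(1+2*x)" and e2: "pi - 2*pi*x = pi*(1-2*x)" by (simp_all add: algebra_simps)
  have ne1: "pi + 2*pi*x \<noteq> 0" unfolding e1 using x1 by simp
  have ne2: "pi - 2*pi*x \<noteq> 0" unfolding e2 using x2 by simp
  have "integral {-(1/2)..1/2} (\<lambda>\<xi>. cos (pi * \<xi>) * cos ((2*pi*x) * \<xi>))
     = sin ((pi + 2*pi*x)*(1/2))/(pi + 2*pi*x) + sin ((pi - 2*pi*x)*(1/2))/(pi - 2*pi*x)"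
    by (rule cos_cos_int[OF ne1 ne2]) simp
  moreover have iv: "{-1/2..1/2::real} = {-(1/2)..1/2}" by simp
  moreover have "KL x = integral {-(1/2)..1/2} (\<lambda>\<xi>. cos (pi * \<xi>) * cos ((2*pi*x) * \<xi>))"
    unfolding KL_def iv ..
  ultimately have "KL x = sin ((pi + 2*pi*x)*(1/2))/(pi + 2*pi*x) + sin ((pi - 2*pi*x)*(1/2))/(pi - 2*pi*x)"
    by simp
  also have "(pi + 2*pi*x)*(1/2) = pi/2 + pi*x" by (simp add: algebra_simps)
  also have "(pi - 2*pi*x)*(1/2) = pi/2 - pi*x" by (simp add: algebra_simps)
  also have "sin (pi/2 + pi*x)/(pi + 2*pi*x) + sin (pi/2 - pi*x)/(pi - 2*pi*x)
        = cos (pi * x) * (1/(pi*(1 + 2*x)) + 1/(pi*(1 - 2*x)))"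
    unfolding sin_half_plus sin_half_minus e1 e2 by (simp add: distrib_left)
  also have "1/(pi*(1 + 2*x)) + 1/(pi*(1 - 2*x)) = 2 / (pi * (1 - 4 * x\<^sup>2))"
  proof -
    have f: "1 - 4 * x\<^sup>2 = (1+2*x)*(1-2*x)" by (simp add: algebra_simps power2_eq_square)
    have "1/(pi*(1 + 2*x)) + 1/(pi*(1 - 2*x)) = ((1+2*x) + (1-2*x)) / (pi*((1+2*x)*(1-2*x)))"
      by (rule aux_frac2[OF x1 x2])
    then show ?thesis unfolding f by simp
  qed
  finally show ?thesis .
qed

lemma KL_0: "KL 0 = 2 / pi"
  using KL_formula[of 0] by simp

lemma KL_bound:
  assumes "\<bar>x\<bar> \<ge> 1"
  shows "\<bar>KL x\<bar> \<le> 2 / (pi * (4 * x\<^sup>2 - 1))"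
proof -
  have "\<bar>x\<bar>\<^sup>2 \<ge> 1" using assms by (rule one_le_power)
  then have "x\<^sup>2 \<ge> 1" by simp
  then have pos: "4 * x\<^sup>2 - 1 > 0" by simp
  then have "4 * x\<^sup>2 \<noteq> 1" by simp
  then have "\<bar>KL x\<bar> = \<bar>cos (pi * x)\<bar> * (2 / (pi * (4 * x\<^sup>2 - 1)))"
    using pos by (simp add: KL_formula abs_mult abs_divide)
  also have "\<dots> \<le> 1 * (2 / (pi * (4 * x\<^sup>2 - 1)))"
    using pos by (intro mult_right_mono) auto
  finally show ?thesis by simp
qed


lemma KU_formula:
  assumes x1: "1/2 + 2 * x \<noteq> 0" and x2: "1/2 - 2 * x \<noteq> 0"
  shows "KU x = cos (2 * pi * x) * (1 / (pi * ((1/2 + 2*x) * (1/2 - 2*x))))"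
proof -
  have e1: "pi/2 + 2*pi*x = pi*(1/2+2*x)" and e2: "pi/2 - 2*pi*x = pi*(1/2-2*x)" by (simp_all add: algebra_simps)
  have ne1: "pi/2 + 2*pi*x \<noteq> 0" unfolding e1 using x1 by simp
  have ne2: "pi/2 - 2*pi*x \<noteq> 0" unfolding e2 using x2 by simp
  have "integral {-1..1} (\<lambda>\<xi>. cos (pi/2 * \<xi>) * cos ((2*pi*x) * \<xi>))
     = sin ((pi/2 + 2*pi*x)*1)/(pi/2 + 2*pi*x) + sin ((pi/2 - 2*pi*x)*1)/(pi/2 - 2*pi*x)"
    by (rule cos_cos_int[OF ne1 ne2]) simp
  then have "KU x = sin (pi/2 + 2*pi*x)/(pi/2 + 2*pi*x) + sin (pi/2 - 2*pi*x)/(pi/2 - 2*pi*x)"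
    unfolding KU_def by simp
  also have "\<dots> = cos (2 * pi * x) * (1/(pi*(1/2 + 2*x)) + 1/(pi*(1/2 - 2*x)))"
    unfolding sin_half_plus sin_half_minus unfolding e1 e2 by (simp add: distrib_left)
  also have "1/(pi*(1/2 + 2*x)) + 1/(pi*(1/2 - 2*x)) = ((1/2+2*x) + (1/2-2*x)) / (pi*((1/2+2*x)*(1/2-2*x)))"
    by (rule aux_frac2[OF x1 x2])
  finally show ?thesis by simp
qed

lemma KU_0: "KU 0 = 4 / pi"
  using KU_formula[of 0] by simp

lemma KU_bound:
  assumes "\<bar>x\<bar> \<ge> 1"
  shows "\<bar>KU x\<bar> \<le> 2 / (pi * (4 * x\<^sup>2 - 1))"
proof -
  have "\<bar>x\<bar>\<^sup>2 \<ge> 1" using assms by (rule one_le_power)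
  then have xx: "x\<^sup>2 \<ge> 1" by simp
  have x1: "1/2 + 2 * x \<noteq> 0" using assms by auto
  have x2: "1/2 - 2 * x \<noteq> 0" using assms by auto
  have f: "(1/2 + 2*x) * (1/2 - 2*x) = - (4 * x\<^sup>2 - 1/4)" by (simp add: algebra_simps power2_eq_square)
  have p1: "4 * x\<^sup>2 - 1/4 > 0" "4 * x\<^sup>2 - 1 > 0" using xx by auto
  have "\<bar>KU x\<bar> = \<bar>cos (2 * pi * x)\<bar> * (1 / (pi * (4 * x\<^sup>2 - 1/4)))"
    using p1 by (simp add: KU_formula[OF x1 x2] f abs_mult abs_divide)
  also have "\<dots> \<le> 1 * (1 / (pi * (4 * x\<^sup>2 - 1/4)))"
    using p1 by (intro mult_right_mono) auto
  also have "\<dots> \<le> 2 / (pi * (4 * x\<^sup>2 - 1))"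
  proof -
    have "pi * (4 * x\<^sup>2 - 1) \<le> 2 * (pi * (4 * x\<^sup>2 - 1/4))" using xx by (simp add: algebra_simps)
    then show ?thesis using p1 by (simp add: divide_simps)
  qed
  finally show ?thesis .
qed


lemma aux_tele:
  fixes p q :: real
  assumes "p > 0" "q = p + 2"
  shows "1/(p*q) = (1/p - 1/q)/2"
proof -
  have "q > 0" using assms by simp
  then have "1/p - 1/q = (q - p)/(p*q)" using assms by (simp add: diff_frac_eq)
  then show ?thesis using assms by simp
qed

lemma tele_step:
  fixes g N :: real
  assumes "g \<ge> 1" "N \<ge> 1"
  shows "1/(2*g\<^sup>2) * (1 - 1/(2*(N-1)+1)) + 1/(g\<^sup>2*(4*N\<^sup>2-1)) = 1/(2*g\<^sup>2) * (1 - 1/(2*N+1))"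
proof -
  have a: "2*N - 1 > 0" "2*N+1 > 0" using assms by auto
  have b: "4*N\<^sup>2-1 = (2*N-1)*(2*N+1)" by (simp add: algebra_simps power2_eq_square)
  have eq1: "1/(4*N\<^sup>2-1) = (1/(2*N-1) - 1/(2*N+1))/2"
    unfolding b by (rule aux_tele) (use a in auto)
  have e0: "2*(N-1)+1 = 2*N - 1" by simp
  have "1/(g\<^sup>2*(4*N\<^sup>2-1)) = (1/g\<^sup>2) * (1/(4*N\<^sup>2-1))" by simp
  also have "\<dots> = (2 * (1/(2*g\<^sup>2))) * ((1/(2*N-1) - 1/(2*N+1))/2)" unfolding eq1 by simp
  finally have e: "1/(g\<^sup>2*(4*N\<^sup>2-1)) = (2 * (1/(2*g\<^sup>2))) * ((1/(2*N-1) - 1/(2*N+1))/2)" .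
  have c: "(c::real)*(1 - B) + (2*c)*((B - A)/2) = c*(1 - A)" for c A B
    by (simp add: field_simps)
  show ?thesis unfolding e0 e by (rule c)
qed

lemma sep_sum_aux:
  fixes g :: real
  assumes g: "g \<ge> 1"
  shows "\<forall>D. finite D \<and> card D = n \<and> (\<forall>x\<in>D. x \<ge> g) \<and> (\<forall>x\<in>D. \<forall>y\<in>D. x \<noteq> y \<longrightarrow> \<bar>x - y\<bar> \<ge> g)
     \<longrightarrow> (D \<noteq> {} \<longrightarrow> Max D \<ge> real n * g) \<and> (\<Sum>x\<in>D. 1/(4*x\<^sup>2-1)) \<le> 1/(2*g\<^sup>2) * (1 - 1/(2*real n+1))"
proof (induction n)
  case 0
  then show ?case by auto
next
  case (Suc n)
  show ?case
  proof (intro allI impI)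
    fix D :: "real set"
    assume H: "finite D \<and> card D = Suc n \<and> (\<forall>x\<in>D. x \<ge> g) \<and> (\<forall>x\<in>D. \<forall>y\<in>D. x \<noteq> y \<longrightarrow> \<bar>x - y\<bar> \<ge> g)"
    then have fin: "finite D" and cD: "card D = Suc n" and ge: "\<forall>x\<in>D. x \<ge> g"
      and sep: "\<forall>x\<in>D. \<forall>y\<in>D. x \<noteq> y \<longrightarrow> \<bar>x - y\<bar> \<ge> g" by auto
    then have ne: "D \<noteq> {}" by auto
    define M where "M = Max D"
    have MD: "M \<in> D" using fin ne by (simp add: M_def)
    define D' where "D' = D - {M}"
    have fin': "finite D'" using fin by (simp add: D'_def)
    have cD': "card D' = n" using cD MD fin by (simp add: D'_def)
    have IH: "(D' \<noteq> {} \<longrightarrow> Max D' \<ge> real n * g) \<and> (\<Sum>x\<in>D'. 1/(4*x\<^sup>2-1)) \<le> 1/(2*g\<^sup>2) * (1 - 1/(2*real n+1))"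
      using Suc.IH fin' cD' ge sep by (auto simp: D'_def)
    have Mbig: "M \<ge> real (Suc n) * g"
    proof (cases "D' = {}")
      case True
      then have "n = 0" using cD' by auto
      then show ?thesis using ge MD by simp
    next
      case False
      have m'D: "Max D' \<in> D'" using fin' False by simp
      then have "Max D' \<le> M" "Max D' \<noteq> M" using fin by (auto simp: D'_def M_def)
      moreover have "\<bar>Max D' - M\<bar> \<ge> g" using sep m'D MD \<open>Max D' \<noteq> M\<close> by (auto simp: D'_def)
      ultimately have "M \<ge> Max D' + g" by linarith
      then show ?thesis using IH False by (simp add: distrib_right)
    qed
    have N1: "real (Suc n) \<ge> 1" by simp
    have hM: "1/(4*M\<^sup>2-1) \<le> 1/(g\<^sup>2*(4*(real (Suc n))\<^sup>2-1))"
    proof -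
      have "real (Suc n) * g \<ge> 0" using g by simp
      then have "M \<ge> 0" using Mbig by linarith
      have "M\<^sup>2 \<ge> (real (Suc n) * g)\<^sup>2" using Mbig g by (intro power_mono) auto
      then have "4*M\<^sup>2-1 \<ge> 4*(real (Suc n))\<^sup>2 * g\<^sup>2 - 1" by (simp add: power_mult_distrib)
      moreover have "4*(real (Suc n))\<^sup>2 * g\<^sup>2 - 1 \<ge> g\<^sup>2*(4*(real (Suc n))\<^sup>2-1)"
      proof -
        have "g\<^sup>2 \<ge> 1" using g by (simp add: one_le_power)
        then show ?thesis by (simp add: algebra_simps)
      qed
      moreover have "g\<^sup>2*(4*(real (Suc n))\<^sup>2-1) > 0"
      proof -
        have "(real (Suc n))\<^sup>2 \<ge> 1" using N1 by (simp add: one_le_power)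
        then have "4*(real (Suc n))\<^sup>2-1 > 0" by linarith
        moreover have "g\<^sup>2 > 0" using g by simp
        ultimately show ?thesis by (rule mult_pos_pos[rotated])
      qed
      ultimately show ?thesis by (intro divide_left_mono) auto
    qed
    have "(\<Sum>x\<in>D. 1/(4*x\<^sup>2-1)) = 1/(4*M\<^sup>2-1) + (\<Sum>x\<in>D'. 1/(4*x\<^sup>2-1))"
      using fin MD by (simp add: D'_def sum.remove)
    also have "\<dots> \<le> 1/(g\<^sup>2*(4*(real (Suc n))\<^sup>2-1)) + 1/(2*g\<^sup>2) * (1 - 1/(2*real n+1))"
      using hM IH by linarith
    also have "\<dots> = 1/(2*g\<^sup>2) * (1 - 1/(2*real (Suc n)+1))"
      using tele_step[OF g N1] by simp
    finally show "(D \<noteq> {} \<longrightarrow> Max D \<ge> real (Suc n) * g) \<and> (\<Sum>x\<in>D. 1/(4*x\<^sup>2-1)) \<le> 1/(2*g\<^sup>2) * (1 - 1/(2*real (Suc n)+1))"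
      using Mbig by (simp add: M_def)
  qed
qed

lemma sep_sum:
  fixes g :: real
  assumes g: "g \<ge> 1" and "finite D" "\<forall>x\<in>D. x \<ge> g" "\<forall>x\<in>D. \<forall>y\<in>D. x \<noteq> y \<longrightarrow> \<bar>x - y\<bar> \<ge> g"
  shows "(\<Sum>x\<in>D. 1/(4*x\<^sup>2-1)) \<le> 1/(2*g\<^sup>2)"
proof -
  have "(\<Sum>x\<in>D. 1/(4*x\<^sup>2-1)) \<le> 1/(2*g\<^sup>2) * (1 - 1/(2*real (card D)+1))"
    using sep_sum_aux[OF g, of "card D"] assms by auto
  also have "\<dots> \<le> 1/(2*g\<^sup>2) * 1"
    using g by (intro mult_left_mono) auto
  finally show ?thesis by simp
qed


lemma off_sum_side:
  fixes g :: real and lam :: "nat \<Rightarrow> real"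
  assumes g: "g \<ge> 1" and fin: "finite A"
    and sep: "\<forall>n\<in>A. \<forall>m\<in>A. n \<noteq> m \<longrightarrow> \<bar>lam n - lam m\<bar> \<ge> g"
    and pos: "\<forall>m\<in>A. lam m - c \<ge> g"
  shows "(\<Sum>m\<in>A. 1/(4*(lam m - c)\<^sup>2-1)) \<le> 1/(2*g\<^sup>2)"
proof -
  have inj: "inj_on (\<lambda>m. lam m - c) A"
  proof (rule inj_onI)
    fix x y assume "x \<in> A" "y \<in> A" "lam x - c = lam y - c"
    then show "x = y" using sep g by (metis abs_zero diff_self not_one_le_zero order_trans eq_diff_eq)
  qed
  have "(\<Sum>m\<in>A. 1/(4*(lam m - c)\<^sup>2-1)) = (\<Sum>x\<in>(\<lambda>m. lam m - c) ` A. 1/(4*x\<^sup>2-1))"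
    by (simp add: sum.reindex[OF inj])
  also have "\<dots> \<le> 1/(2*g\<^sup>2)"
  proof (rule sep_sum[OF g])
    show "finite ((\<lambda>m. lam m - c) ` A)" using fin by simp
    show "\<forall>x\<in>(\<lambda>m. lam m - c) ` A. g \<le> x" using pos by auto
    show "\<forall>x\<in>(\<lambda>m. lam m - c) ` A. \<forall>y\<in>(\<lambda>m. lam m - c) ` A. x \<noteq> y \<longrightarrow> g \<le> \<bar>x - y\<bar>"
      using sep by force
  qed
  finally show ?thesis .
qed

lemma off_sum:
  fixes g :: real and lam :: "nat \<Rightarrow> real"
  assumes g: "g \<ge> 1" and fin: "finite I" and nI: "n \<in> I"
    and sep: "\<forall>n\<in>I. \<forall>m\<in>I. n \<noteq> m \<longrightarrow> \<bar>lam n - lam m\<bar> \<ge> g"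
  shows "(\<Sum>m\<in>I-{n}. 1/(4*(lam n - lam m)\<^sup>2-1)) \<le> 1/g\<^sup>2"
proof -
  define R where "R = {m\<in>I-{n}. lam m > lam n}"
  define L where "L = {m\<in>I-{n}. lam m < lam n}"
  have split: "I - {n} = R \<union> L"
  proof -
    have "lam m \<noteq> lam n" if "m \<in> I - {n}" for m
      using sep nI that g by fastforce
    then have "lam m > lam n \<or> lam m < lam n" if "m \<in> I - {n}" for m
      using that by (meson linorder_neqE_linordered_idom)
    then show ?thesis unfolding R_def L_def by blast
  qed
  have disj: "R \<inter> L = {}" by (auto simp: R_def L_def)
  have finR: "finite R" "finite L" using fin by (auto simp: R_def L_def)
  have sR: "(\<Sum>m\<in>R. 1/(4*(lam n - lam m)\<^sup>2-1)) \<le> 1/(2*g\<^sup>2)"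
  proof -
    have "(\<Sum>m\<in>R. 1/(4*(lam n - lam m)\<^sup>2-1)) = (\<Sum>m\<in>R. 1/(4*(lam m - lam n)\<^sup>2-1))"
      by (simp add: power2_commute)
    also have "\<dots> \<le> 1/(2*g\<^sup>2)"
    proof (rule off_sum_side[OF g finR(1)])
      show "\<forall>a\<in>R. \<forall>b\<in>R. a \<noteq> b \<longrightarrow> \<bar>lam a - lam b\<bar> \<ge> g" using sep by (auto simp: R_def)
      show "\<forall>m\<in>R. lam m - lam n \<ge> g"
      proof
        fix m assume "m \<in> R"
        then have "m \<in> I" "m \<noteq> n" "lam m > lam n" by (auto simp: R_def)
        then show "lam m - lam n \<ge> g" using sep nI by force
      qed
    qed
    finally show ?thesis .
  qed
  have sL: "(\<Sum>m\<in>L. 1/(4*(lam n - lam m)\<^sup>2-1)) \<le> 1/(2*g\<^sup>2)"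
  proof -
    have "(\<Sum>m\<in>L. 1/(4*(lam n - lam m)\<^sup>2-1)) = (\<Sum>m\<in>L. 1/(4*((\<lambda>k. - lam k) m - (- lam n))\<^sup>2-1))"
      by (simp add: power2_commute)
    also have "\<dots> \<le> 1/(2*g\<^sup>2)"
    proof (rule off_sum_side[OF g finR(2)])
      show "\<forall>a\<in>L. \<forall>b\<in>L. a \<noteq> b \<longrightarrow> \<bar>(\<lambda>k. - lam k) a - (\<lambda>k. - lam k) b\<bar> \<ge> g"
        using sep by (auto simp: L_def abs_minus_commute)
      show "\<forall>m\<in>L. (\<lambda>k. - lam k) m - (- lam n) \<ge> g"
      proof
        fix m assume "m \<in> L"
        then have "m \<in> I" "m \<noteq> n" "lam m < lam n" by (auto simp: L_def)
        then show "(\<lambda>k. - lam k) m - (- lam n) \<ge> g" using sep nI by force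
      qed
    qed
    finally show ?thesis .
  qed
  have "(\<Sum>m\<in>I-{n}. 1/(4*(lam n - lam m)\<^sup>2-1)) = (\<Sum>m\<in>R. 1/(4*(lam n - lam m)\<^sup>2-1)) + (\<Sum>m\<in>L. 1/(4*(lam n - lam m)\<^sup>2-1))"
    unfolding split by (rule sum.union_disjoint[OF finR disj])
  also have "\<dots> \<le> 1/(2*g\<^sup>2) + 1/(2*g\<^sup>2)" using sR sL by linarith
  also have "\<dots> = 1/g\<^sup>2" by simp
  finally show ?thesis .
qed


lemma schur:
  fixes k :: "nat \<Rightarrow> nat \<Rightarrow> real" and x :: "nat \<Rightarrow> real"
  assumes fin: "finite I" and kpos: "\<And>n m. k n m \<ge> 0" and ksym: "\<And>n m. k n m = k m n"
    and kB: "\<And>n. n \<in> I \<Longrightarrow> (\<Sum>m\<in>I. k n m) \<le> B"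
    and xpos: "\<And>n. x n \<ge> 0"
  shows "(\<Sum>n\<in>I. \<Sum>m\<in>I. x n * x m * k n m) \<le> B * (\<Sum>n\<in>I. (x n)\<^sup>2)"
proof -
  have 1: "(\<Sum>n\<in>I. \<Sum>m\<in>I. x n * x m * k n m) \<le> (\<Sum>n\<in>I. \<Sum>m\<in>I. ((x n)\<^sup>2/2 + (x m)\<^sup>2/2) * k n m)"
  proof (intro sum_mono mult_right_mono kpos)
    fix n m
    show "x n * x m \<le> (x n)\<^sup>2/2 + (x m)\<^sup>2/2" using sum_squares_bound[of "x n" "x m"] by simp
  qed
  have 2: "(\<Sum>n\<in>I. \<Sum>m\<in>I. ((x n)\<^sup>2/2 + (x m)\<^sup>2/2) * k n m)
      = (\<Sum>n\<in>I. \<Sum>m\<in>I. (x n)\<^sup>2/2 * k n m) + (\<Sum>n\<in>I. \<Sum>m\<in>I. (x m)\<^sup>2/2 * k n m)"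
    by (simp add: distrib_right sum.distrib)
  have 3: "(\<Sum>n\<in>I. \<Sum>m\<in>I. (x m)\<^sup>2/2 * k n m) = (\<Sum>n\<in>I. \<Sum>m\<in>I. (x n)\<^sup>2/2 * k n m)"
    by (subst sum.swap) (simp add: ksym)
  have 4: "(\<Sum>n\<in>I. \<Sum>m\<in>I. (x n)\<^sup>2/2 * k n m) = (\<Sum>n\<in>I. (x n)\<^sup>2/2 * (\<Sum>m\<in>I. k n m))"
    by (simp add: sum_distrib_left)
  have 5: "(\<Sum>n\<in>I. (x n)\<^sup>2/2 * (\<Sum>m\<in>I. k n m)) \<le> (\<Sum>n\<in>I. (x n)\<^sup>2/2 * B)"
    by (intro sum_mono mult_left_mono kB) auto
  have 6: "(\<Sum>n\<in>I. (x n)\<^sup>2/2 * B) = B * (\<Sum>n\<in>I. (x n)\<^sup>2) / 2"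
    by (simp add: sum_distrib_left sum_divide_distrib mult.commute)
  show ?thesis using 1 2 3 4 5 6 by linarith
qed

lemma QF_dev:
  fixes g :: real and lam :: "nat \<Rightarrow> real" and W :: "real \<Rightarrow> real"
  assumes g: "g \<ge> 1" and fin: "finite I"
    and sep: "\<forall>n\<in>I. \<forall>m\<in>I. n \<noteq> m \<longrightarrow> \<bar>lam n - lam m\<bar> \<ge> g"
    and Wb: "\<And>x. \<bar>x\<bar> \<ge> 1 \<Longrightarrow> \<bar>W x\<bar> \<le> 2 / (pi * (4 * x\<^sup>2 - 1))"
  shows "\<bar>QF I a lam W - W 0 * (\<Sum>n\<in>I. (cmod (a n))\<^sup>2)\<bar> \<le> 2 / (pi * g\<^sup>2) * (\<Sum>n\<in>I. (cmod (a n))\<^sup>2)"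
proof -
  define c where "c n m = Re (a n * cnj (a m))" for n m
  define k where "k n m = (if n \<noteq> m \<and> \<bar>lam n - lam m\<bar> \<ge> 1 then 2 / (pi * (4 * (lam n - lam m)\<^sup>2 - 1)) else 0)" for n m
  have cnn: "c n n = (cmod (a n))\<^sup>2" for n
    using complex_norm_square[of "a n"] unfolding c_def by (metis Re_complex_of_real)
  have cb: "\<bar>c n m\<bar> \<le> cmod (a n) * cmod (a m)" for n m
    unfolding c_def using abs_Re_le_cmod[of "a n * cnj (a m)"] by (simp add: norm_mult)
  have dge: "\<bar>lam n - lam m\<bar> \<ge> 1" if "n \<in> I" "m \<in> I" "n \<noteq> m" for n m
    using sep that g by force
  have row: "(\<Sum>m\<in>I. c n m * W (lam n - lam m)) = c n n * W 0 + (\<Sum>m\<in>I. if m = n then 0 else c n m * W (lam n - lam m))"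
    if "n \<in> I" for n
  proof -
    have "(\<Sum>m\<in>I. c n m * W (lam n - lam m)) = (\<Sum>m\<in>I. (if m = n then c n n * W 0 else 0) + (if m = n then 0 else c n m * W (lam n - lam m)))"
      by (intro sum.cong) auto
    also have "\<dots> = c n n * W 0 + (\<Sum>m\<in>I. if m = n then 0 else c n m * W (lam n - lam m))"
      using that fin by (simp add: sum.distrib)
    finally show ?thesis .
  qed
  define E where "E = (\<Sum>n\<in>I. \<Sum>m\<in>I. if m = n then 0 else c n m * W (lam n - lam m))"
  have QFe: "QF I a lam W = W 0 * (\<Sum>n\<in>I. (cmod (a n))\<^sup>2) + E"
  proof -
    have "QF I a lam W = (\<Sum>n\<in>I. c n n * W 0 + (\<Sum>m\<in>I. if m = n then 0 else c n m * W (lam n - lam m)))"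
      unfolding QF_def c_def[symmetric] by (intro sum.cong refl row)
    also have "\<dots> = W 0 * (\<Sum>n\<in>I. (cmod (a n))\<^sup>2) + E"
      by (simp add: sum.distrib E_def cnn sum_distrib_left mult.commute)
    finally show ?thesis .
  qed
  have "\<bar>E\<bar> \<le> (\<Sum>n\<in>I. \<Sum>m\<in>I. \<bar>if m = n then 0 else c n m * W (lam n - lam m)\<bar>)"
    unfolding E_def by (rule order_trans[OF sum_abs sum_mono[OF sum_abs]])
  also have "\<dots> \<le> (\<Sum>n\<in>I. \<Sum>m\<in>I. cmod (a n) * cmod (a m) * k n m)"
  proof (intro sum_mono)
    fix n m assume nm: "n \<in> I" "m \<in> I"
    show "\<bar>if m = n then 0 else c n m * W (lam n - lam m)\<bar> \<le> cmod (a n) * cmod (a m) * k n m"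
    proof (cases "m = n")
      case False
      have d: "\<bar>lam n - lam m\<bar> \<ge> 1" using dge nm False by auto
      have "\<bar>c n m * W (lam n - lam m)\<bar> = \<bar>c n m\<bar> * \<bar>W (lam n - lam m)\<bar>" by (simp add: abs_mult)
      also have "\<dots> \<le> (cmod (a n) * cmod (a m)) * (2 / (pi * (4 * (lam n - lam m)\<^sup>2 - 1)))"
        by (intro mult_mono cb Wb d) auto
      finally show ?thesis using False d by (simp add: k_def)
    qed (simp add: k_def)
  qed
  also have "\<dots> \<le> 2 / (pi * g\<^sup>2) * (\<Sum>n\<in>I. (cmod (a n))\<^sup>2)"
  proof (rule schur[OF fin])
    show "k n m \<ge> 0" for n m
    proof (cases "n \<noteq> m \<and> \<bar>lam n - lam m\<bar> \<ge> 1")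
      case True
      have "\<bar>lam n - lam m\<bar>\<^sup>2 \<ge> 1" using True by (intro one_le_power) auto
      then have "4 * (lam n - lam m)\<^sup>2 - 1 > 0" by simp
      then show ?thesis using True by (simp add: k_def)
    qed (auto simp: k_def)
    show "k n m = k m n" for n m
      by (simp add: k_def power2_commute abs_minus_commute)
    show "cmod (a n) \<ge> 0" for n by simp
    fix n assume nI: "n \<in> I"
    have "(\<Sum>m\<in>I. k n m) = (\<Sum>m\<in>I-{n}. 2 / pi * (1 / (4 * (lam n - lam m)\<^sup>2 - 1)))"
    proof -
      have "(\<Sum>m\<in>I. k n m) = (\<Sum>m\<in>I. if m = n then 0 else 2 / pi * (1 / (4 * (lam n - lam m)\<^sup>2 - 1)))"
        using dge nI by (intro sum.cong refl) (auto simp: k_def)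
      also have "\<dots> = (\<Sum>m\<in>I-{n}. 2 / pi * (1 / (4 * (lam n - lam m)\<^sup>2 - 1)))"
        using fin by (simp add: sum.If_cases Diff_eq)
      finally show ?thesis .
    qed
    also have "\<dots> = 2 / pi * (\<Sum>m\<in>I-{n}. 1 / (4 * (lam n - lam m)\<^sup>2 - 1))"
      by (simp add: sum_distrib_left)
    also have "\<dots> \<le> 2 / pi * (1 / g\<^sup>2)"
      by (intro mult_left_mono off_sum[OF g fin nI sep]) auto
    finally show "(\<Sum>m\<in>I. k n m) \<le> 2 / (pi * g\<^sup>2)" by simp
  qed
  finally show ?thesis using QFe by simp
qed


lemma QF_cong: "(\<And>x. W x = V x) \<Longrightarrow> QF I a lam W = QF I a lam V"
  by (simp add: QF_def)

lemma QF_sinc_int: "finite I \<Longrightarrow> QF I a lam sinc = integral {-1/2..1/2} (\<lambda>\<xi>. 1 * PP I a lam \<xi>)"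
  using PP_integral[of I "-1/2" "1/2" "\<lambda>_. 1" a lam] sinc_int by (simp add: QF_def)

lemma QF_KL_int: "finite I \<Longrightarrow> QF I a lam KL = integral {-1/2..1/2} (\<lambda>\<xi>. cos (pi * \<xi>) * PP I a lam \<xi>)"
  using PP_integral[of I "-1/2" "1/2" "\<lambda>\<xi>. cos (pi * \<xi>)" a lam]
  by (simp add: KL_def[abs_def] continuous_intros)

lemma QF_KU_int: "finite I \<Longrightarrow> QF I a lam KU = integral {-1..1} (\<lambda>\<xi>. cos (pi / 2 * \<xi>) * PP I a lam \<xi>)"
  using PP_integral[of I "-1" "1" "\<lambda>\<xi>. cos (pi / 2 * \<xi>)" a lam]
  by (simp add: KU_def[abs_def] continuous_intros)

lemma QF_lower: "finite I \<Longrightarrow> QF I a lam KL \<le> QF I a lam sinc"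
proof -
  assume fin: "finite I"
  have "integral {-1/2..1/2} (\<lambda>\<xi>. cos (pi * \<xi>) * PP I a lam \<xi>) \<le> integral {-1/2..1/2} (\<lambda>\<xi>. 1 * PP I a lam \<xi>)"
    by (intro integral_le integrable_continuous_real continuous_intros continuous_on_PP mult_right_mono PP_nonneg) auto
  then show ?thesis using fin by (simp add: QF_sinc_int QF_KL_int)
qed

lemma cos_half_ge: assumes "\<bar>\<xi>\<bar> \<le> 1/2" shows "cos (pi / 2 * \<xi>) \<ge> 1/2"
proof -
  have "cos (pi / 2 * \<xi>) = cos \<bar>pi / 2 * \<xi>\<bar>" by (rule cos_abs_real[symmetric])
  also have "\<dots> \<ge> cos (pi / 3)"
  proof (subst cos_mono_le_eq)
    have "\<bar>pi / 2 * \<xi>\<bar> = pi / 2 * \<bar>\<xi>\<bar>" by (simp add: abs_mult)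
    also have "\<dots> \<le> pi / 2 * (1/2)" using assms by (intro mult_left_mono) auto
    finally have "\<bar>pi / 2 * \<xi>\<bar> \<le> pi / 4" by simp
    then show "\<bar>pi / 2 * \<xi>\<bar> \<le> pi / 3" using pi_gt_zero by linarith
    show "\<bar>pi / 2 * \<xi>\<bar> \<le> pi" using \<open>\<bar>pi / 2 * \<xi>\<bar> \<le> pi / 4\<close> pi_gt_zero by linarith
  qed auto
  finally show ?thesis by (simp add: cos_60)
qed

lemma cos_half_nonneg: assumes "\<bar>\<xi>\<bar> \<le> 1" shows "cos (pi / 2 * \<xi>) \<ge> 0"
proof (rule cos_ge_zero)
  have "\<bar>pi / 2 * \<xi>\<bar> = pi / 2 * \<bar>\<xi>\<bar>" by (simp add: abs_mult)
  also have "\<dots> \<le> pi / 2 * 1" using assms by (intro mult_left_mono) auto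
  finally show "- (pi / 2) \<le> pi / 2 * \<xi>" "pi / 2 * \<xi> \<le> pi / 2" by linarith+
qed

lemma QF_upper: "finite I \<Longrightarrow> QF I a lam sinc \<le> 2 * QF I a lam KU"
proof -
  assume fin: "finite I"
  let ?P = "PP I a lam"
  have "integral {-1/2..1/2} (\<lambda>\<xi>. 1 * ?P \<xi>) \<le> integral {-1/2..1/2} (\<lambda>\<xi>. 2 * (cos (pi / 2 * \<xi>) * ?P \<xi>))"
  proof (intro integral_le integrable_continuous_real continuous_intros continuous_on_PP)
    fix \<xi> :: real assume "\<xi> \<in> {-1/2..1/2}"
    then have "\<bar>\<xi>\<bar> \<le> 1/2" by auto
    then have h: "1 \<le> 2 * cos (pi / 2 * \<xi>)" using cos_half_ge by fastforce
    show "1 * ?P \<xi> \<le> 2 * (cos (pi / 2 * \<xi>) * ?P \<xi>)"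
      using mult_right_mono[OF h PP_nonneg[of I a lam \<xi>]] by (simp only: mult.assoc)
  qed
  also have "\<dots> \<le> integral {-1..1} (\<lambda>\<xi>. 2 * (cos (pi / 2 * \<xi>) * ?P \<xi>))"
  proof (rule Henstock_Kurzweil_Integration.integral_subset_le)
    show "{-1/2..1/2} \<subseteq> {-1..1::real}" by auto
    show "(\<lambda>\<xi>. 2 * (cos (pi / 2 * \<xi>) * ?P \<xi>)) integrable_on {-1/2..1/2}"
      by (intro integrable_continuous_real continuous_intros continuous_on_PP)
    show "(\<lambda>\<xi>. 2 * (cos (pi / 2 * \<xi>) * ?P \<xi>)) integrable_on {-1..1}"
      by (intro integrable_continuous_real continuous_intros continuous_on_PP)
    show "\<forall>x\<in>{-1..1}. 0 \<le> 2 * (cos (pi / 2 * x) * ?P x)"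
      using cos_half_nonneg PP_nonneg by (auto intro!: mult_nonneg_nonneg)
  qed
  also have "\<dots> = 2 * QF I a lam KU" using fin by (simp add: QF_KU_int)
  finally show ?thesis using fin by (simp add: QF_sinc_int)
qed


theorem corollary1:
  fixes \<gamma> :: real
  assumes "\<gamma> > sqrt (1/3 + pi\<^sup>2/12)"
  shows "\<exists>c1 c2. c1 > 0 \<and> c2 > 0 \<and>
    (\<forall>(R::nat) (lam::nat \<Rightarrow> real) (a::nat \<Rightarrow> complex).
       (\<forall>n\<in>{1..R}. \<forall>m\<in>{1..R}. n \<noteq> m \<longrightarrow> \<bar>lam n - lam m\<bar> \<ge> \<gamma>) \<longrightarrow>
       (let f = (\<lambda>t. \<Sum>n\<in>{1..R}. a n * complex_of_real (sinc (t - lam n))) in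
         c1 * (\<Sum>n\<in>{1..R}. (cmod (a n))\<^sup>2) \<le> energy f \<and>
         energy f \<le> c2 * (\<Sum>n\<in>{1..R}. (cmod (a n))\<^sup>2)))"
proof -
  have "3*3 < pi*pi" using pi_gt3 by (intro mult_strict_mono) auto
  then have "9 < pi\<^sup>2" by (simp add: power2_eq_square)
  then have "1 < 1/3 + pi\<^sup>2/12" by simp
  then have "1 < sqrt (1/3 + pi\<^sup>2/12)" by simp
  then have g1: "\<gamma> > 1" using assms by linarith
  then have gg: "\<gamma>\<^sup>2 > 1" by (simp add: one_less_power)
  define c1 where "c1 = 2 / pi - 2 / (pi * \<gamma>\<^sup>2)"
  define c2 where "c2 = 12 / pi"
  have p: "pi < pi * \<gamma>\<^sup>2" using gg by simp
  have q: "0 < pi * \<gamma>\<^sup>2 * pi" using gg by (intro mult_pos_pos) auto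
  have Bs: "2 / (pi * \<gamma>\<^sup>2) < 2 / pi"
    by (rule divide_strict_left_mono[OF p _ q]) simp
  have Bs': "2 / (pi * \<gamma>\<^sup>2) \<le> 2 / pi" using Bs by simp
  have c1p: "c1 > 0" using Bs by (simp add: c1_def)
  have c2p: "c2 > 0" by (simp add: c2_def)
  show ?thesis
  proof (intro exI conjI allI impI)
    show "c1 > 0" "c2 > 0" by (fact c1p c2p)+
    fix R :: nat and lam :: "nat \<Rightarrow> real" and a :: "nat \<Rightarrow> complex"
    assume sep: "\<forall>n\<in>{1..R}. \<forall>m\<in>{1..R}. n \<noteq> m \<longrightarrow> \<bar>lam n - lam m\<bar> \<ge> \<gamma>"
    let ?I = "{1..R}"
    let ?S = "\<Sum>n\<in>?I. (cmod (a n))\<^sup>2"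
    have fin: "finite ?I" by simp
    have S0: "?S \<ge> 0" by (simp add: sum_nonneg)
    have E: "energy (\<lambda>t. \<Sum>n\<in>?I. a n * complex_of_real (sinc (t - lam n))) = QF ?I a lam sinc"
      by (rule energy_eq[OF fin])
    have dL: "\<bar>QF ?I a lam KL - KL 0 * ?S\<bar> \<le> 2 / (pi * \<gamma>\<^sup>2) * ?S"
      using g1 sep by (intro QF_dev[OF _ fin] KL_bound) auto
    have dU: "\<bar>QF ?I a lam KU - KU 0 * ?S\<bar> \<le> 2 / (pi * \<gamma>\<^sup>2) * ?S"
      using g1 sep by (intro QF_dev[OF _ fin] KU_bound) auto
    have low: "c1 * ?S \<le> QF ?I a lam sinc"
    proof -
      have "c1 * ?S = 2 / pi * ?S - 2 / (pi * \<gamma>\<^sup>2) * ?S" by (simp add: c1_def left_diff_distrib)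
      also have "\<dots> \<le> QF ?I a lam KL" using dL by (simp add: KL_0)
      also have "\<dots> \<le> QF ?I a lam sinc" by (rule QF_lower[OF fin])
      finally show ?thesis .
    qed
    have up: "QF ?I a lam sinc \<le> c2 * ?S"
    proof -
      have "QF ?I a lam sinc \<le> 2 * QF ?I a lam KU" by (rule QF_upper[OF fin])
      also have "\<dots> \<le> 2 * (4 / pi * ?S + 2 / (pi * \<gamma>\<^sup>2) * ?S)" using dU by (simp add: KU_0)
      also have "\<dots> \<le> 2 * (4 / pi * ?S + 2 / pi * ?S)"
        using mult_right_mono[OF Bs' S0] by simp
      also have "\<dots> = c2 * ?S" by (simp add: c2_def field_simps)
      finally show ?thesis .
    qed
    show "let f = (\<lambda>t. \<Sum>n\<in>{1..R}. a n * complex_of_real (sinc (t - lam n))) in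
         c1 * (\<Sum>n\<in>{1..R}. (cmod (a n))\<^sup>2) \<le> energy f \<and>
         energy f \<le> c2 * (\<Sum>n\<in>{1..R}. (cmod (a n))\<^sup>2)"
      unfolding Let_def E using low up by simp
  qed
qed

end
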